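(* Let $\mathbb{R}_0=\{x\in\mathbb{R}: x\ge 0\}$ and let $\widetilde{U}:\mathbb{R}_0\to\mathbb{R}_0$ be defined by \[ \widetilde{U}(x)=\begin{cases} \dfrac{3x+1}{2} & \text{if } \lfloor x\rfloor \text{ is even},\\[4pt] \dfrac{x}{2} & \text{if } \lfloor x\rfloor \text{ is odd}.\end{cases}\] Then there are no $\widetilde{U}$-cycles: there is no $x\in\mathbb{R}_0$ and no integer $k\ge 1$ with $\widetilde{U}^k(x)=x$.
   Context: $\lfloor x\rfloor$ denotes the largest integer $\le x$. For a function $f:X\to X$, $f^0$ is the identity and $f^i=f\circ f^{i-1}$. An $f$-cycle is the trajectory of a point $z$ with $f^n(z)=z$ for some $n\ge 1$. *)

theory Defs
  imports Complex_Main
begin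

definition Ut :: "real \<Rightarrow> real" where
  "Ut x = (if even \<lfloor>x\<rfloor> then (3 * x + 1) / 2 else x / 2)"

end

theory Submission
  imports Defs
begin

definition EE :: "real \<Rightarrow> real" where "EE x = real_of_int \<lfloor>x\<rfloor> + 1 - x"

lemma EE_pos: "EE x > 0"
  unfolding EE_def by linarith

lemma step_bound:
  "\<exists>m::nat. m \<le> 1 \<and> Ut y \<ge> (3^m / 2) * y \<and> EE (Ut y) \<le> (3^m / 2) * EE y"
proof (cases "even \<lfloor>y\<rfloor>")
  case True
  then obtain m where m: "\<lfloor>y\<rfloor> = 2*m" by (auto elim: evenE)
  have u: "Ut y = (3*y+1)/2" using True by (simp add: Ut_def)
  have "\<lfloor>Ut y\<rfloor> \<le> 3*m+1"
    using m u by (simp add: floor_le_iff) linarith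
  hence f: "real_of_int \<lfloor>(3*y+1)/2\<rfloor> \<le> 3*real_of_int m+1" unfolding u by linarith
  have "EE (Ut y) \<le> (3/2) * EE y"
    unfolding EE_def u using m f by (simp add: field_simps)
  moreover have "Ut y \<ge> (3/2) * y" using u by simp
  ultimately show ?thesis by (intro exI[of _ 1]) simp
next
  case False
  then obtain m where m: "\<lfloor>y\<rfloor> = 2*m+1" by (meson oddE)
  have u: "Ut y = y/2" using False by (simp add: Ut_def)
  have "\<lfloor>Ut y\<rfloor> = m"
    unfolding u using m by (simp add: floor_eq_iff)
  hence "EE (Ut y) = (1/2) * EE y"
    unfolding EE_def u using m by (simp add: field_simps)
  moreover have "Ut y \<ge> (1/2) * y" using u by simp
  ultimately show ?thesis by (intro exI[of _ 0]) simp
qed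

lemma iter_bound:
  "\<exists>a::nat. (Ut ^^ k) x \<ge> (3^a / 2^k) * x \<and> EE ((Ut ^^ k) x) \<le> (3^a / 2^k) * EE x"
proof (induction k)
  case 0
  show ?case by (intro exI[of _ 0]) simp
next
  case (Suc k)
  then obtain a where a: "(Ut ^^ k) x \<ge> (3^a / 2^k) * x"
    "EE ((Ut ^^ k) x) \<le> (3^a / 2^k) * EE x" by blast
  obtain m::nat where m: "m \<le> 1" "Ut ((Ut ^^ k) x) \<ge> (3^m / 2) * (Ut ^^ k) x"
    "EE (Ut ((Ut ^^ k) x)) \<le> (3^m / 2) * EE ((Ut ^^ k) x)"
    using step_bound by blast
  have c: "(3::real)^m / 2 > 0" by simp
  have eq: "(3::real)^(a+m) / 2^(Suc k) = (3^m/2) * (3^a/2^k)"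
    by (simp add: power_add)
  have "(Ut ^^ Suc k) x \<ge> (3^(a+m) / 2^(Suc k)) * x"
    using m(2) mult_left_mono[OF a(1) less_imp_le[OF c]] unfolding eq by simp
  moreover have "EE ((Ut ^^ Suc k) x) \<le> (3^(a+m) / 2^(Suc k)) * EE x"
    using m(3) mult_left_mono[OF a(2) less_imp_le[OF c]] unfolding eq by simp
  ultimately show ?case by blast
qed

lemma Ut_pos: "y \<ge> 0 \<Longrightarrow> Ut y > 0 \<or> (y > 0 \<and> Ut y > 0)"
  unfolding Ut_def by (cases "y = 0") auto

lemma iter_pos: "x \<ge> 0 \<Longrightarrow> k \<ge> 1 \<Longrightarrow> (Ut ^^ k) x > 0"
proof (induction k)
  case 0 then show ?case by simp
next
  case (Suc k)
  have "(Ut ^^ k) x \<ge> 0"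
    using Suc by (cases "k = 0") auto
  then show ?case using Ut_pos[of "(Ut ^^ k) x"] by auto
qed

theorem theorem2:
  shows "\<not> (\<exists>x::real. \<exists>k::nat. x \<ge> 0 \<and> k \<ge> 1 \<and> (Ut ^^ k) x = x)"
proof
  assume "\<exists>x::real. \<exists>k::nat. x \<ge> 0 \<and> k \<ge> 1 \<and> (Ut ^^ k) x = x"
  then obtain x :: real and k :: nat where h: "x \<ge> 0" "k \<ge> 1" "(Ut ^^ k) x = x" by blast
  have xpos: "x > 0" using iter_pos[OF h(1) h(2)] h(3) by simp
  obtain a where a: "x \<ge> (3^a / 2^k) * x" "EE x \<le> (3^a / 2^k) * EE x"
    using iter_bound[of k x] h(3) by auto
  define p :: real where "p = 3^a / 2^k"
  have "p \<ge> 1" using a(2) EE_pos[of x] unfolding p_def[symmetric]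
    by (metis mult_le_cancel_right1)
  moreover have "p \<noteq> 1"
  proof
    assume "p = 1"
    hence "(3::real)^a = 2^k" unfolding p_def by simp
    hence "(3::nat)^a = 2^k" by (metis of_nat_eq_iff of_nat_numeral of_nat_power)
    moreover have "odd ((3::nat)^a)" by simp
    moreover have "even ((2::nat)^k)" using h(2) by simp
    ultimately show False by simp
  qed
  ultimately have "p > 1" by simp
  hence "p * x > x" using xpos by simp
  thus False using a(1) unfolding p_def[symmetric] by simp
qed

end
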